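(* Consider the multi-user private information retrieval (MUPIR) setting with $N \ge 1$ non-curious or computationally-limited databases and $U \ge 1$ trustworthy users, with $K$ messages, and let $S = N + U - 1$ denote the number of information sources. Then the capacity (supremum of achievable rates under the privacy constraints) of this setting is $$C_{\text{MUPIR}} = \Big(1 + \frac{1}{S} + \frac{1}{S^2} + \cdots + \frac{1}{S^{K-1}}\Big)^{-1}.$$
   Context: Setting (MUPIR): $N$ replicated, non-communicating databases each store the same $K$ independent messages $W_1,\dots,W_K$, each of $L$ bits, so $H(W_k)=L$ for all $k\in[K]=\{1,\dots,K\}$ and $H(W_{1:K})=KL$. A central user wishes to retrieve $W_\theta$, $\theta\in[K]$, with the help of the other $U-1$ users. The $S=N+U-1$ sources are the $N$ databases and the $U-1$ other users. The central user generates queries $Q^{[\theta]}_s$, $s\in[S]$, one per source; a query sent to a database is answered directly by that database with $A^{[\theta]}_s$, while a query sent to another user is forwarded by that user to some database and the resulting answer $A^{[\theta]}_s$ is returned to the central user. Queries are independent of the messages: $I(Q^{[k]}_{1:S};W_{1:K})=0$ for all $k\in[K]$. Privacy: for every source $s$, $(Q^{[1]}_s,A^{[1]}_s,W_{1:K})$ and $(Q^{[k]}_s,A^{[k]}_s,W_{1:K})$ are identically distributed for every $k\in[K]$. Correctness: $W_\theta$ is recoverable from all answers and queries. Writing $\sum Q$ for $Q^{[\theta]}_{1:S}$, the rate is $R = L/D = H(W_\theta)/\big(S\,H(A^{[\theta]}_1 \mid \sum Q)\big)$, where $D$ is the total number of downloaded bits; upload cost is ignored. "Computationally-limited" means a database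 does not cross-reference the queries of different users (it analyzes only the queries of a single user at a time). *)

theory Defs
  imports "HOL-Probability.Probability_Mass_Function"
begin

definition ent :: "'a pmf \<Rightarrow> real" where
  "ent p = - (\<Sum>x\<in>set_pmf p. pmf p x * log 2 (pmf p x))"

definition cond_ent :: "'c pmf \<Rightarrow> ('c \<Rightarrow> 'a) \<Rightarrow> ('c \<Rightarrow> 'b) \<Rightarrow> real" where
  "cond_ent p X Y = ent (map_pmf (\<lambda>z. (X z, Y z)) p) - ent (map_pmf Y p)"

definition msg_set :: "nat \<Rightarrow> nat \<Rightarrow> bool list list set" where
  "msg_set K L = {w. length w = K \<and> (\<forall>k<K. length (w ! k) = L)}"

(* Messages are independent and uniform: H(W_k) = L, H(W_{1:K}) = K L. *)
definition msg_dist :: "nat \<Rightarrow> nat \<Rightarrow> bool list list pmf" where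
  "msg_dist K L = pmf_of_set (msg_set K L)"

(* Joint law of (queries, messages) when message theta is desired;
   queries are independent of the messages. Qd theta is the law of
   the query tuple (Q_s^[theta])_{s<S}, a list of length S. *)
definition joint :: "(nat \<Rightarrow> nat list pmf) \<Rightarrow> nat \<Rightarrow> nat \<Rightarrow> nat \<Rightarrow> (nat list \<times> bool list list) pmf" where
  "joint Qd K L \<theta> = pair_pmf (Qd \<theta>) (msg_dist K L)"

(* Answers: source s answers its own query q only (non-curious /
   computationally-limited databases: no cross-referencing of queries). *)
definition answers :: "nat \<Rightarrow> (nat \<Rightarrow> nat \<Rightarrow> bool list list \<Rightarrow> bool list) \<Rightarrow> nat list \<Rightarrow> bool list list \<Rightarrow> bool list list" where
  "answers S ans q w = map (\<lambda>s. ans s (q ! s) w) [0..<S]"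

definition mupir_scheme :: "nat \<Rightarrow> nat \<Rightarrow> nat \<Rightarrow> nat \<Rightarrow> (nat \<Rightarrow> nat list pmf)
    \<Rightarrow> (nat \<Rightarrow> nat \<Rightarrow> bool list list \<Rightarrow> bool list) \<Rightarrow> bool" where
  "mupir_scheme N U K L Qd ans \<longleftrightarrow>
     (let S = N + U - 1 in
       (\<forall>\<theta><K. finite (set_pmf (Qd \<theta>)) \<and> (\<forall>q\<in>set_pmf (Qd \<theta>). length q = S)) \<and>
       (\<comment> \<open>privacy at every source\<close>
        \<forall>s<S. \<forall>k<K.
          map_pmf (\<lambda>(q, w). (q ! s, ans s (q ! s) w, w)) (joint Qd K L 0) =
          map_pmf (\<lambda>(q, w). (q ! s, ans s (q ! s) w, w)) (joint Qd K L k)) \<and>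
       (\<comment> \<open>correctness (zero error)\<close>
        \<exists>dec. \<forall>\<theta><K. \<forall>q\<in>set_pmf (Qd \<theta>). \<forall>w\<in>msg_set K L.
          dec \<theta> q (answers S ans q w) = w ! \<theta>))"

definition download :: "nat \<Rightarrow> nat \<Rightarrow> nat \<Rightarrow> nat \<Rightarrow> (nat \<Rightarrow> nat list pmf)
    \<Rightarrow> (nat \<Rightarrow> nat \<Rightarrow> bool list list \<Rightarrow> bool list) \<Rightarrow> nat \<Rightarrow> real" where
  "download N U K L Qd ans \<theta> =
     (\<Sum>s<N + U - 1. cond_ent (joint Qd K L \<theta>) (\<lambda>(q, w). ans s (q ! s) w) (\<lambda>(q, w). q))"

definition mupir_rate :: "nat \<Rightarrow> nat \<Rightarrow> nat \<Rightarrow> nat \<Rightarrow> (nat \<Rightarrow> nat list pmf)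
    \<Rightarrow> (nat \<Rightarrow> nat \<Rightarrow> bool list list \<Rightarrow> bool list) \<Rightarrow> real" where
  "mupir_rate N U K L Qd ans =
     real L / (MAX \<theta>\<in>{..<K}. download N U K L Qd ans \<theta>)"

definition mupir_capacity :: "nat \<Rightarrow> nat \<Rightarrow> nat \<Rightarrow> real" where
  "mupir_capacity N U K =
     Sup {mupir_rate N U K L Qd ans | L Qd ans. mupir_scheme N U K L Qd ans}"

end

theory Submission
  imports Defs "HOL-Library.Nat_Bijection"
begin


definition Hn :: "'a pmf \<Rightarrow> ('a \<Rightarrow> 'b) \<Rightarrow> real" where
  "Hn p f = ent (map_pmf f p)"

lemma pmf_map_sum:
  assumes "finite (set_pmf p)"
  shows "pmf (map_pmf f p) b = (\<Sum>\<omega>\<in>{\<omega>\<in>set_pmf p. f \<omega> = b}. pmf p \<omega>)"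
proof -
  have "pmf (map_pmf f p) b = measure p (f -` {b} \<inter> set_pmf p)"
    by (simp add: pmf_map measure_Int_set_pmf)
  also have "\<dots> = sum (pmf p) (f -` {b} \<inter> set_pmf p)"
    using assms by (simp add: measure_measure_pmf_finite)
  also have "f -` {b} \<inter> set_pmf p = {\<omega>\<in>set_pmf p. f \<omega> = b}" by auto
  finally show ?thesis .
qed

lemma sum_map_pmf:
  assumes "finite (set_pmf p)"
  shows "(\<Sum>\<omega>\<in>set_pmf p. pmf p \<omega> * g (f \<omega>))
       = (\<Sum>b\<in>set_pmf (map_pmf f p). pmf (map_pmf f p) b * g b)"
proof -
  have "(\<Sum>\<omega>\<in>set_pmf p. pmf p \<omega> * g (f \<omega>))
      = (\<Sum>b\<in>f ` set_pmf p. \<Sum>\<omega>\<in>{\<omega>\<in>set_pmf p. f \<omega> = b}. pmf p \<omega> * g (f \<omega>))"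
    by (rule sum.image_gen[OF assms])
  also have "\<dots> = (\<Sum>b\<in>f ` set_pmf p. pmf (map_pmf f p) b * g b)"
  proof (intro sum.cong refl)
    fix b assume "b \<in> f ` set_pmf p"
    have "(\<Sum>\<omega>\<in>{\<omega>\<in>set_pmf p. f \<omega> = b}. pmf p \<omega> * g (f \<omega>))
        = (\<Sum>\<omega>\<in>{\<omega>\<in>set_pmf p. f \<omega> = b}. pmf p \<omega> * g b)"
      by (rule sum.cong) auto
    also have "\<dots> = pmf (map_pmf f p) b * g b"
      by (simp add: pmf_map_sum[OF assms] sum_distrib_right)
    finally show "(\<Sum>\<omega>\<in>{\<omega>\<in>set_pmf p. f \<omega> = b}. pmf p \<omega> * g (f \<omega>)) = pmf (map_pmf f p) b * g b" .
  qed
  finally show ?thesis by (simp only: set_map_pmf)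
qed

lemma ent_expect:
  assumes "finite (set_pmf p)"
  shows "ent (map_pmf f p) = - (\<Sum>\<omega>\<in>set_pmf p. pmf p \<omega> * log 2 (pmf (map_pmf f p) (f \<omega>)))"
  unfolding ent_def
  using sum_map_pmf[OF assms, of "\<lambda>b. log 2 (pmf (map_pmf f p) b)" f] by simp

lemma Hn_expect:
  assumes "finite (set_pmf p)"
  shows "Hn p f = - (\<Sum>\<omega>\<in>set_pmf p. pmf p \<omega> * log 2 (pmf (map_pmf f p) (f \<omega>)))"
  unfolding Hn_def by (rule ent_expect[OF assms])

lemma pmf_map_pos:
  assumes "\<omega> \<in> set_pmf p"
  shows "pmf (map_pmf f p) (f \<omega>) > 0"
  using assms by (simp add: pmf_positive)

lemma Hn_mono:
  assumes fin: "finite (set_pmf p)"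
    and dep: "\<And>z z'. z \<in> set_pmf p \<Longrightarrow> z' \<in> set_pmf p \<Longrightarrow> G z = G z' \<Longrightarrow> F z = F z'"
  shows "Hn p F \<le> Hn p G"
proof -
  have "(\<Sum>\<omega>\<in>set_pmf p. pmf p \<omega> * log 2 (pmf (map_pmf G p) (G \<omega>)))
     \<le> (\<Sum>\<omega>\<in>set_pmf p. pmf p \<omega> * log 2 (pmf (map_pmf F p) (F \<omega>)))"
  proof (rule sum_mono)
    fix \<omega> assume w: "\<omega> \<in> set_pmf p"
    have "pmf (map_pmf G p) (G \<omega>) \<le> pmf (map_pmf F p) (F \<omega>)"
      unfolding pmf_map_sum[OF fin]
    proof (rule sum_mono2)
      show "finite {z \<in> set_pmf p. F z = F \<omega>}" using fin by simp
      show "{z \<in> set_pmf p. G z = G \<omega>} \<subseteq> {z \<in> set_pmf p. F z = F \<omega>}"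
        using dep w by blast
    qed simp
    then have "log 2 (pmf (map_pmf G p) (G \<omega>)) \<le> log 2 (pmf (map_pmf F p) (F \<omega>))"
      using pmf_map_pos[OF w, of G] by simp
    then show "pmf p \<omega> * log 2 (pmf (map_pmf G p) (G \<omega>))
        \<le> pmf p \<omega> * log 2 (pmf (map_pmf F p) (F \<omega>))"
      by (simp add: mult_left_mono)
  qed
  then show ?thesis unfolding Hn_expect[OF fin] by linarith
qed

lemma Hn_eq:
  assumes fin: "finite (set_pmf p)"
    and dep: "\<And>z z'. z \<in> set_pmf p \<Longrightarrow> z' \<in> set_pmf p \<Longrightarrow> G z = G z' \<longleftrightarrow> F z = F z'"
  shows "Hn p F = Hn p G"
  using Hn_mono[OF fin, of G F] Hn_mono[OF fin, of F G] dep by (auto intro: antisym)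

lemma Hn_cong:
  assumes "\<And>z. z \<in> set_pmf p \<Longrightarrow> F z = G z"
  shows "Hn p F = Hn p G"
  unfolding Hn_def using assms by (intro arg_cong[where f=ent] map_pmf_cong refl) auto

lemma Hn_map:
  "Hn (map_pmf t p) F = Hn p (\<lambda>z. F (t z))"
  unfolding Hn_def by (simp add: map_pmf_comp)

lemma Hn_transfer:
  assumes "map_pmf t p1 = map_pmf t p2"
  shows "Hn p1 (\<lambda>z. F (t z)) = Hn p2 (\<lambda>z. F (t z))"
  using Hn_map[of t p1 F] Hn_map[of t p2 F] assms by simp



lemma marg_sum:
  assumes fin: "finite (set_pmf m)" and finA: "finite A" and sub: "fst ` set_pmf m \<subseteq> A"
  shows "(\<Sum>x\<in>A. pmf m (x, z)) = pmf (map_pmf snd m) z"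
proof -
  have "pmf (map_pmf snd m) z = (\<Sum>\<omega>\<in>{\<omega>\<in>set_pmf m. snd \<omega> = z}. pmf m \<omega>)"
    by (rule pmf_map_sum[OF fin])
  also have "{\<omega>\<in>set_pmf m. snd \<omega> = z} = (\<lambda>x. (x, z)) ` {x\<in>A. (x, z) \<in> set_pmf m}"
    using sub by force
  also have "(\<Sum>\<omega>\<in>(\<lambda>x. (x, z)) ` {x\<in>A. (x, z) \<in> set_pmf m}. pmf m \<omega>)
      = (\<Sum>x\<in>{x\<in>A. (x, z) \<in> set_pmf m}. pmf m (x, z))"
    by (subst sum.reindex) (auto simp: inj_on_def)
  also have "\<dots> = (\<Sum>x\<in>A. pmf m (x, z))"
    by (rule sum.mono_neutral_left) (auto simp: finA set_pmf_eq)
  finally show ?thesis by simp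
qed

lemma ln_le_lin: "u > 0 \<Longrightarrow> log 2 u \<le> (u - 1) / ln 2"
  using ln_le_minus_one[of u] by (simp add: log_def divide_right_mono)

lemma submod_triple:
  fixes r :: "('x \<times> 'y \<times> 'z) pmf"
  assumes fin: "finite (set_pmf r)"
  shows "Hn r (\<lambda>t. t) + Hn r (\<lambda>t. snd (snd t))
       \<le> Hn r (\<lambda>t. (fst t, snd (snd t))) + Hn r (\<lambda>t. (fst (snd t), snd (snd t)))"
proof -
  define ra where "ra = map_pmf (\<lambda>t. (fst t, snd (snd t))) r"
  define rb where "rb = map_pmf (\<lambda>t. (fst (snd t), snd (snd t))) r"
  define rc where "rc = map_pmf (\<lambda>t. snd (snd t)) r"
  define rr where "rr = map_pmf (\<lambda>t. t) r"
  have rr: "rr = r" unfolding rr_def by simp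
  define Xs where "Xs = fst ` set_pmf r"
  define Ys where "Ys = (\<lambda>t. fst (snd t)) ` set_pmf r"
  define Zs where "Zs = (\<lambda>t. snd (snd t)) ` set_pmf r"
  have finX: "finite Xs" and finY: "finite Ys" and finZ: "finite Zs"
    using fin by (auto simp: Xs_def Ys_def Zs_def)
  define Q where "Q t = pmf ra (fst t, snd (snd t)) * pmf rb (fst (snd t), snd (snd t)) / pmf rc (snd (snd t))" for t
  have Qnn: "Q t \<ge> 0" for t unfolding Q_def by simp
  have rca: "rc = map_pmf snd ra" unfolding rc_def ra_def by (simp add: map_pmf_comp)
  have rcb: "rc = map_pmf snd rb" unfolding rc_def rb_def by (simp add: map_pmf_comp)
  have finra: "finite (set_pmf ra)" using fin by (simp add: ra_def)
  have finrb: "finite (set_pmf rb)" using fin by (simp add: rb_def)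
  have sa: "(\<Sum>x\<in>Xs. pmf ra (x, z)) = pmf rc z" for z
    unfolding rca by (rule marg_sum[OF finra finX]) (force simp: ra_def Xs_def)
  have sb: "(\<Sum>y\<in>Ys. pmf rb (y, z)) = pmf rc z" for z
    unfolding rcb by (rule marg_sum[OF finrb finY]) (force simp: rb_def Ys_def)
  have sc: "(\<Sum>z\<in>Zs. pmf rc z) = 1"
    by (rule sum_pmf_eq_1) (use finZ in \<open>auto simp: rc_def Zs_def\<close>)
  have "sum Q (set_pmf r) \<le> sum Q (Xs \<times> (Ys \<times> Zs))"
  proof (rule sum_mono2)
    show "finite (Xs \<times> (Ys \<times> Zs))" using finX finY finZ by simp
    show "set_pmf r \<subseteq> Xs \<times> (Ys \<times> Zs)" unfolding Xs_def Ys_def Zs_def by force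
  qed (simp add: Qnn)
  also have "sum Q (Xs \<times> (Ys \<times> Zs)) = (\<Sum>x\<in>Xs. \<Sum>y\<in>Ys. \<Sum>z\<in>Zs. Q (x, y, z))"
    by (simp add: sum.cartesian_product)
  also have "\<dots> = (\<Sum>z\<in>Zs. \<Sum>x\<in>Xs. \<Sum>y\<in>Ys. Q (x, y, z))"
    by (subst sum.swap) (simp add: sum.swap[of _ Ys])
  also have "\<dots> = (\<Sum>z\<in>Zs. (\<Sum>x\<in>Xs. pmf ra (x, z)) * (\<Sum>y\<in>Ys. pmf rb (y, z)) / pmf rc z)"
    by (simp add: Q_def sum_product sum_divide_distrib)
  also have "\<dots> = (\<Sum>z\<in>Zs. pmf rc z)"
    by (rule sum.cong) (auto simp: sa sb)
  finally have Qle: "sum Q (set_pmf r) \<le> 1" using sc by simp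
  have key: "(\<Sum>t\<in>set_pmf r. pmf r t * log 2 (Q t / pmf r t)) \<le> 0"
  proof -
    have "(\<Sum>t\<in>set_pmf r. pmf r t * log 2 (Q t / pmf r t))
        \<le> (\<Sum>t\<in>set_pmf r. (Q t - pmf r t) / ln 2)"
    proof (rule sum_mono)
      fix t assume t: "t \<in> set_pmf r"
      have pr: "pmf r t > 0" using t by (simp add: pmf_positive)
      have pa: "pmf ra (fst t, snd (snd t)) > 0" unfolding ra_def using pmf_map_pos[OF t, of "\<lambda>t. (fst t, snd (snd t))"] by simp
      have pb: "pmf rb (fst (snd t), snd (snd t)) > 0" unfolding rb_def using pmf_map_pos[OF t, of "\<lambda>t. (fst (snd t), snd (snd t))"] by simp
      have pc: "pmf rc (snd (snd t)) > 0" unfolding rc_def using pmf_map_pos[OF t, of "\<lambda>t. snd (snd t)"] by simp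
      have Qp: "Q t > 0" unfolding Q_def using pa pb pc by simp
      have "pmf r t * log 2 (Q t / pmf r t) \<le> pmf r t * ((Q t / pmf r t - 1) / ln 2)"
        using ln_le_lin[of "Q t / pmf r t"] Qp pr by (intro mult_left_mono) auto
      also have "\<dots> = (Q t - pmf r t) / ln 2" using pr by (simp add: field_simps)
      finally show "pmf r t * log 2 (Q t / pmf r t) \<le> (Q t - pmf r t) / ln 2" .
    qed
    also have "\<dots> = (sum Q (set_pmf r) - sum (pmf r) (set_pmf r)) / ln 2"
      by (simp add: sum_divide_distrib[symmetric] sum_subtractf)
    also have "sum (pmf r) (set_pmf r) = 1" by (rule sum_pmf_eq_1) (auto simp: fin)
    finally have "(\<Sum>t\<in>set_pmf r. pmf r t * log 2 (Q t / pmf r t)) \<le> (sum Q (set_pmf r) - 1) / ln 2" .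
    moreover have "(sum Q (set_pmf r) - 1) / ln 2 \<le> 0"
      using Qle by (intro divide_nonpos_pos) auto
    ultimately show ?thesis by linarith
  qed
  have eq: "(\<Sum>t\<in>set_pmf r. pmf r t * log 2 (Q t / pmf r t))
      = Hn r (\<lambda>t. snd (snd t)) + Hn r (\<lambda>t. t) - Hn r (\<lambda>t. (fst t, snd (snd t))) - Hn r (\<lambda>t. (fst (snd t), snd (snd t)))"
  proof -
    have "(\<Sum>t\<in>set_pmf r. pmf r t * log 2 (Q t / pmf r t))
       = (\<Sum>t\<in>set_pmf r. pmf r t * log 2 (pmf ra (fst t, snd (snd t)))
            + pmf r t * log 2 (pmf rb (fst (snd t), snd (snd t)))
            - pmf r t * log 2 (pmf rc (snd (snd t))) - pmf r t * log 2 (pmf rr t))"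
    proof (rule sum.cong[OF refl])
      fix t assume t: "t \<in> set_pmf r"
      have pr: "pmf r t > 0" using t by (simp add: pmf_positive)
      have pa: "pmf ra (fst t, snd (snd t)) > 0" unfolding ra_def using pmf_map_pos[OF t, of "\<lambda>t. (fst t, snd (snd t))"] by simp
      have pb: "pmf rb (fst (snd t), snd (snd t)) > 0" unfolding rb_def using pmf_map_pos[OF t, of "\<lambda>t. (fst (snd t), snd (snd t))"] by simp
      have pc: "pmf rc (snd (snd t)) > 0" unfolding rc_def using pmf_map_pos[OF t, of "\<lambda>t. snd (snd t)"] by simp
      show "pmf r t * log 2 (Q t / pmf r t) = pmf r t * log 2 (pmf ra (fst t, snd (snd t)))
            + pmf r t * log 2 (pmf rb (fst (snd t), snd (snd t)))
            - pmf r t * log 2 (pmf rc (snd (snd t))) - pmf r t * log 2 (pmf rr t)"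
        unfolding Q_def rr using pr pa pb pc
        by (simp add: log_mult log_divide algebra_simps)
    qed
    also have "\<dots> = Hn r (\<lambda>t. snd (snd t)) + Hn r (\<lambda>t. t) - Hn r (\<lambda>t. (fst t, snd (snd t))) - Hn r (\<lambda>t. (fst (snd t), snd (snd t)))"
      unfolding Hn_expect[OF fin] ra_def rb_def rc_def rr_def
      by (simp only: sum.distrib sum_subtractf)
    finally show ?thesis by simp
  qed
  show ?thesis using key eq by linarith
qed

lemma Hn_submod:
  assumes fin: "finite (set_pmf p)"
  shows "Hn p (\<lambda>z. (X z, Y z, Z z)) + Hn p Z \<le> Hn p (\<lambda>z. (X z, Z z)) + Hn p (\<lambda>z. (Y z, Z z))"
proof -
  define r where "r = map_pmf (\<lambda>z. (X z, Y z, Z z)) p"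
  have finr: "finite (set_pmf r)" using fin by (simp add: r_def)
  have "Hn r (\<lambda>t. t) + Hn r (\<lambda>t. snd (snd t))
       \<le> Hn r (\<lambda>t. (fst t, snd (snd t))) + Hn r (\<lambda>t. (fst (snd t), snd (snd t)))"
    by (rule submod_triple[OF finr])
  then show ?thesis unfolding r_def Hn_map by simp
qed

lemma ent_nonneg_aux:
  assumes "finite (set_pmf p)"
  shows "ent p \<ge> 0"
proof -
  have "(\<Sum>x\<in>set_pmf p. pmf p x * log 2 (pmf p x)) \<le> 0"
  proof (rule sum_nonpos)
    fix x assume x: "x \<in> set_pmf p"
    have "0 < pmf p x" "pmf p x \<le> 1" using x by (auto simp: pmf_positive pmf_le_1)
    then show "pmf p x * log 2 (pmf p x) \<le> 0" by (simp add: mult_nonneg_nonpos)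
  qed
  then show ?thesis unfolding ent_def by simp
qed

lemma ent_pair:
  assumes fA: "finite (set_pmf A)" and fB: "finite (set_pmf B)"
  shows "ent (pair_pmf A B) = ent A + ent B"
proof -
  have sA: "sum (pmf A) (set_pmf A) = 1" by (rule sum_pmf_eq_1) (auto simp: fA)
  have sB: "sum (pmf B) (set_pmf B) = 1" by (rule sum_pmf_eq_1) (auto simp: fB)
  have "(\<Sum>x\<in>set_pmf (pair_pmf A B). pmf (pair_pmf A B) x * log 2 (pmf (pair_pmf A B) x))
     = (\<Sum>(a,b)\<in>set_pmf A \<times> set_pmf B. pmf A a * pmf B b * log 2 (pmf A a * pmf B b))"
    by (simp only: set_pair_pmf, rule sum.cong) (auto simp: pmf_pair)
  also have "\<dots> = (\<Sum>a\<in>set_pmf A. \<Sum>b\<in>set_pmf B. pmf A a * pmf B b * log 2 (pmf A a * pmf B b))"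
    by (simp add: sum.cartesian_product)
  also have "\<dots> = (\<Sum>a\<in>set_pmf A. \<Sum>b\<in>set_pmf B. pmf B b * (pmf A a * log 2 (pmf A a))
                      + pmf A a * (pmf B b * log 2 (pmf B b)))"
    by (intro sum.cong refl) (auto simp: log_mult pmf_positive algebra_simps)
  also have "\<dots> = (\<Sum>a\<in>set_pmf A. pmf A a * log 2 (pmf A a))
                 + (\<Sum>b\<in>set_pmf B. pmf B b * log 2 (pmf B b))"
    by (simp add: sum.distrib sum_distrib_left[symmetric] sum_distrib_right[symmetric] sA sB)
  finally show ?thesis unfolding ent_def by simp
qed

lemma Hn_indep:
  assumes fA: "finite (set_pmf A)" and fB: "finite (set_pmf B)"
  shows "Hn (pair_pmf A B) (\<lambda>z. (f (fst z), g (snd z))) = Hn A f + Hn B g"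
proof -
  have "(\<lambda>z. (f (fst z), g (snd z))) = (\<lambda>(a, b). (f a, g b))" by auto
  then show ?thesis unfolding Hn_def using fA fB by (simp add: map_pair ent_pair)
qed

lemma Hn_fst:
  "Hn (pair_pmf A B) (\<lambda>z. f (fst z)) = Hn A f"
proof -
  have "map_pmf (\<lambda>z. f (fst z)) (pair_pmf A B) = map_pmf f (map_pmf fst (pair_pmf A B))"
    by (simp add: map_pmf_comp)
  then show ?thesis unfolding Hn_def by (simp add: map_fst_pair_pmf)
qed

lemma Hn_snd:
  "Hn (pair_pmf A B) (\<lambda>z. f (snd z)) = Hn B f"
proof -
  have "map_pmf (\<lambda>z. f (snd z)) (pair_pmf A B) = map_pmf f (map_pmf snd (pair_pmf A B))"
    by (simp add: map_pmf_comp)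
  then show ?thesis unfolding Hn_def by (simp add: map_snd_pair_pmf)
qed

lemma ent_uniform:
  assumes "finite A" "A \<noteq> {}"
  shows "ent (pmf_of_set A) = log 2 (card A)"
proof -
  have c: "card A > 0" using assms by (simp add: card_gt_0_iff)
  have "ent (pmf_of_set A) = - (\<Sum>x\<in>A. (1 / card A) * log 2 (1 / card A))"
    unfolding ent_def using assms by (intro arg_cong[where f=uminus] sum.cong) auto
  also have "\<dots> = log 2 (card A)" using c by (simp add: log_divide)
  finally show ?thesis .
qed



lemma fin_pair: "finite (set_pmf P) \<Longrightarrow> finite (set_pmf M) \<Longrightarrow> finite (set_pmf (pair_pmf P M))"
  by simp

lemma indep_step:
  assumes fP: "finite (set_pmf P)" and fM: "finite (set_pmf M)"
  shows "Hn (pair_pmf P M) (\<lambda>z. (a (qn (fst z)) (snd z), t (snd z), fst z)) - Hn (pair_pmf P M) (\<lambda>z. (t (snd z), fst z))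
    \<ge> Hn (pair_pmf P M) (\<lambda>z. (a (qn (fst z)) (snd z), t (snd z), qn (fst z))) - Hn (pair_pmf P M) (\<lambda>z. (t (snd z), qn (fst z)))"
proof -
  define p where "p = pair_pmf P M"
  have fin: "finite (set_pmf p)" using fP fM by (simp add: p_def)
  have sm: "Hn p (\<lambda>z. (snd z, fst z, (a (qn (fst z)) (snd z), t (snd z), qn (fst z))))
      + Hn p (\<lambda>z. (a (qn (fst z)) (snd z), t (snd z), qn (fst z)))
    \<le> Hn p (\<lambda>z. (snd z, (a (qn (fst z)) (snd z), t (snd z), qn (fst z))))
      + Hn p (\<lambda>z. (fst z, (a (qn (fst z)) (snd z), t (snd z), qn (fst z))))"
    by (rule Hn_submod[OF fin])
  have e1: "Hn p (\<lambda>z. (snd z, fst z, (a (qn (fst z)) (snd z), t (snd z), qn (fst z))))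
      = Hn P (\<lambda>x. x) + Hn M (\<lambda>x. x)"
  proof -
    have "Hn p (\<lambda>z. (snd z, fst z, (a (qn (fst z)) (snd z), t (snd z), qn (fst z))))
        = Hn p (\<lambda>z. ((\<lambda>x. x) (fst z), (\<lambda>x. x) (snd z)))"
      by (rule Hn_eq[OF fin]) auto
    then show ?thesis unfolding p_def using Hn_indep[OF fP fM, of "\<lambda>x. x" "\<lambda>x. x"] by simp
  qed
  have e2: "Hn p (\<lambda>z. (snd z, (a (qn (fst z)) (snd z), t (snd z), qn (fst z))))
      = Hn P qn + Hn M (\<lambda>x. x)"
  proof -
    have "Hn p (\<lambda>z. (snd z, (a (qn (fst z)) (snd z), t (snd z), qn (fst z))))
        = Hn p (\<lambda>z. (qn (fst z), (\<lambda>x. x) (snd z)))"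
      by (rule Hn_eq[OF fin]) auto
    then show ?thesis unfolding p_def using Hn_indep[OF fP fM, of qn "\<lambda>x. x"] by simp
  qed
  have e3: "Hn p (\<lambda>z. (fst z, (a (qn (fst z)) (snd z), t (snd z), qn (fst z))))
      = Hn p (\<lambda>z. (a (qn (fst z)) (snd z), t (snd z), fst z))"
    by (rule Hn_eq[OF fin]) auto
  have e4: "Hn p (\<lambda>z. (t (snd z), fst z)) = Hn P (\<lambda>x. x) + Hn M t"
  proof -
    have "Hn p (\<lambda>z. (t (snd z), fst z)) = Hn p (\<lambda>z. ((\<lambda>x. x) (fst z), t (snd z)))"
      by (rule Hn_eq[OF fin]) auto
    then show ?thesis unfolding p_def using Hn_indep[OF fP fM, of "\<lambda>x. x" t] by simp
  qed
  have e5: "Hn p (\<lambda>z. (t (snd z), qn (fst z))) = Hn P qn + Hn M t"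
  proof -
    have "Hn p (\<lambda>z. (t (snd z), qn (fst z))) = Hn p (\<lambda>z. (qn (fst z), t (snd z)))"
      by (rule Hn_eq[OF fin]) auto
    then show ?thesis unfolding p_def using Hn_indep[OF fP fM, of qn t] by simp
  qed
  show ?thesis using sm e1 e2 e3 e4 e5 unfolding p_def by linarith
qed

lemma cond_reduce:
  assumes fin: "finite (set_pmf p)"
  shows "Hn p (\<lambda>z. (A z, T z, Q z)) - Hn p (\<lambda>z. (T z, Q z))
      \<le> Hn p (\<lambda>z. (A z, T z, h (Q z))) - Hn p (\<lambda>z. (T z, h (Q z)))"
proof -
  have sm: "Hn p (\<lambda>z. (A z, Q z, (T z, h (Q z)))) + Hn p (\<lambda>z. (T z, h (Q z)))
     \<le> Hn p (\<lambda>z. (A z, (T z, h (Q z)))) + Hn p (\<lambda>z. (Q z, (T z, h (Q z))))"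
    by (rule Hn_submod[OF fin])
  have e1: "Hn p (\<lambda>z. (A z, Q z, (T z, h (Q z)))) = Hn p (\<lambda>z. (A z, T z, Q z))"
    by (rule Hn_eq[OF fin]) auto
  have e2: "Hn p (\<lambda>z. (Q z, (T z, h (Q z)))) = Hn p (\<lambda>z. (T z, Q z))"
    by (rule Hn_eq[OF fin]) auto
  show ?thesis using sm e1 e2 by simp
qed

lemma subadd:
  assumes fin: "finite (set_pmf p)"
  shows "Hn p (\<lambda>z. (map (\<lambda>s. A s z) [0..<m], Y z)) - Hn p Y
      \<le> (\<Sum>s<m. Hn p (\<lambda>z. (A s z, Y z)) - Hn p Y)"
proof (induction m)
  case 0
  have "Hn p (\<lambda>z. (map (\<lambda>s. A s z) [0..<0], Y z)) = Hn p Y"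
    by (rule Hn_eq[OF fin]) auto
  then show ?case by simp
next
  case (Suc m)
  have sm: "Hn p (\<lambda>z. (A m z, map (\<lambda>s. A s z) [0..<m], Y z)) + Hn p Y
     \<le> Hn p (\<lambda>z. (A m z, Y z)) + Hn p (\<lambda>z. (map (\<lambda>s. A s z) [0..<m], Y z))"
    by (rule Hn_submod[OF fin])
  have e: "Hn p (\<lambda>z. (map (\<lambda>s. A s z) [0..<Suc m], Y z))
      = Hn p (\<lambda>z. (A m z, map (\<lambda>s. A s z) [0..<m], Y z))"
    by (rule Hn_eq[OF fin]) auto
  show ?case using Suc.IH sm e by simp
qed

lemma Hn_nonneg_cond:
  assumes fin: "finite (set_pmf p)"
  shows "Hn p (\<lambda>z. (A z, Y z)) - Hn p Y \<ge> 0"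
  using Hn_mono[OF fin, of "\<lambda>z. (A z, Y z)" Y] by auto



lemma msg_set_alt: "msg_set K L = {xs. set xs \<subseteq> {x. length x = L} \<and> length xs = K}"
  unfolding msg_set_def
  apply (auto simp: in_set_conv_nth)
  by (meson mem_Collect_eq nth_mem subsetD)

lemma card_bool_lists: "card {x::bool list. length x = L} = 2 ^ L"
proof -
  have "{x::bool list. length x = L} = {xs. set xs \<subseteq> UNIV \<and> length xs = L}" by auto
  then show ?thesis using card_lists_length_eq[of "UNIV :: bool set" L] by simp
qed

lemma finite_bool_lists: "finite {x::bool list. length x = L}"
proof -
  have "{x::bool list. length x = L} = {xs. set xs \<subseteq> UNIV \<and> length xs = L}" by auto
  then show ?thesis using finite_lists_length_eq[of "UNIV :: bool set" L] by simp
qed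

lemma finite_msg: "finite (msg_set K L)"
  unfolding msg_set_alt by (rule finite_lists_length_eq[OF finite_bool_lists])

lemma card_msg: "card (msg_set K L) = 2 ^ (K * L)"
  unfolding msg_set_alt card_lists_length_eq[OF finite_bool_lists] card_bool_lists
  by (metis power_mult mult.commute)

lemma msg_ne: "msg_set K L \<noteq> {}"
proof -
  have "replicate K (replicate L False) \<in> msg_set K L" unfolding msg_set_def by simp
  then show ?thesis by auto
qed

lemma set_msg_dist[simp]: "set_pmf (msg_dist K L) = msg_set K L"
  unfolding msg_dist_def using finite_msg msg_ne by simp

lemma pmf_msg_dist: "pmf (msg_dist K L) w = indicator (msg_set K L) w / card (msg_set K L)"
  unfolding msg_dist_def using finite_msg msg_ne by simp

lemma fin_msg_dist: "finite (set_pmf (msg_dist K L))"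
  using finite_msg by simp

lemma take_msg: "w \<in> msg_set K L \<Longrightarrow> j \<le> K \<Longrightarrow> take j w \<in> msg_set j L"
  unfolding msg_set_def by auto

lemma fiber_msg:
  assumes j: "j \<le> K" and u: "u \<in> msg_set j L"
  shows "{w\<in>msg_set K L. take j w = u} = (\<lambda>v. u @ v) ` msg_set (K - j) L"
proof (intro set_eqI iffI)
  fix w assume "w \<in> {w\<in>msg_set K L. take j w = u}"
  then have w: "w \<in> msg_set K L" "take j w = u" by auto
  have "drop j w \<in> msg_set (K - j) L" using w(1) j unfolding msg_set_def by auto
  moreover have "w = u @ drop j w" using w(2) by (metis append_take_drop_id)
  ultimately show "w \<in> (\<lambda>v. u @ v) ` msg_set (K - j) L" by blast
next
  fix w assume "w \<in> (\<lambda>v. u @ v) ` msg_set (K - j) L"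
  then obtain v where v: "v \<in> msg_set (K - j) L" "w = u @ v" by auto
  have lu: "length u = j" using u unfolding msg_set_def by auto
  have "w \<in> msg_set K L"
    unfolding msg_set_def
  proof (intro CollectI conjI allI impI)
    show "length w = K" using v lu j unfolding msg_set_def by auto
    fix k assume "k < K"
    show "length (w ! k) = L"
    proof (cases "k < j")
      case True then show ?thesis using v(2) lu u unfolding msg_set_def by (simp add: nth_append)
    next
      case False then show ?thesis using v lu \<open>k < K\<close> unfolding msg_set_def by (simp add: nth_append)
    qed
  qed
  moreover have "take j w = u" using v(2) lu by simp
  ultimately show "w \<in> {w\<in>msg_set K L. take j w = u}" by simp
qed

lemma Hn_take:
  assumes j: "j \<le> K"
  shows "Hn (msg_dist K L) (take j) = real (j * L)"
proof -
  define M where "M = msg_dist K L"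
  have fin: "finite (set_pmf M)" unfolding M_def by (rule fin_msg_dist)
  have cM: "real (card (msg_set K L)) = 2 ^ (K * L)" by (simp add: card_msg)
  have pm: "pmf (map_pmf (take j) M) (take j w) = 1 / 2 ^ (j * L)" if w: "w \<in> msg_set K L" for w
  proof -
    have u: "take j w \<in> msg_set j L" by (rule take_msg[OF w j])
    have "pmf (map_pmf (take j) M) (take j w) = (\<Sum>w'\<in>{w'\<in>msg_set K L. take j w' = take j w}. 1 / 2 ^ (K * L))"
      unfolding pmf_map_sum[OF fin] unfolding M_def set_msg_dist
      by (rule sum.cong) (auto simp: pmf_msg_dist cM)
    also have "\<dots> = card ((\<lambda>v. take j w @ v) ` msg_set (K - j) L) / 2 ^ (K * L)"
      unfolding fiber_msg[OF j u] by simp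
    also have "card ((\<lambda>v. take j w @ v) ` msg_set (K - j) L) = card (msg_set (K - j) L)"
      by (rule card_image) (simp add: inj_on_def)
    also have "real (card (msg_set (K - j) L)) = 2 ^ ((K - j) * L)" by (simp add: card_msg)
    also have "(2::real) ^ (K * L) = 2 ^ ((K - j) * L) * 2 ^ (j * L)"
    proof -
      have "K * L = (K - j) * L + j * L" using j by (simp add: add_mult_distrib[symmetric])
      then show ?thesis by (metis power_add)
    qed
    finally show ?thesis by simp
  qed
  have "Hn M (take j) = - (\<Sum>w\<in>msg_set K L. (1 / 2 ^ (K * L)) * log 2 (1 / 2 ^ (j * L)))"
    unfolding Hn_expect[OF fin]
    by (intro arg_cong[where f=uminus] sum.cong) (auto simp: M_def pmf_msg_dist cM pm[unfolded M_def])
  also have "\<dots> = real (j * L)"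
    using cM by (simp add: log_divide)
  finally show ?thesis unfolding M_def .
qed

lemma Hn_id_msg: "Hn (msg_dist K L) (\<lambda>w. w) = real (K * L)"
proof -
  have "Hn (msg_dist K L) (\<lambda>w. w) = Hn (msg_dist K L) (take K)"
    by (rule Hn_cong) (auto simp: msg_set_def)
  then show ?thesis using Hn_take[of K K L] by simp
qed



lemma G_Suc:
  fixes S :: nat assumes "S \<ge> 1"
  shows "(\<Sum>i<Suc n. 1 / real S ^ i) = 1 + (\<Sum>i<n. 1 / real S ^ i) / real S"
proof -
  have "(\<Sum>i<Suc n. 1 / real S ^ i) = 1 / real S ^ 0 + (\<Sum>i<n. 1 / real S ^ Suc i)"
    by (rule sum.lessThan_Suc_shift)
  also have "(\<Sum>i<n. 1 / real S ^ Suc i) = (\<Sum>i<n. 1 / real S ^ i) / real S"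
    by (simp add: sum_divide_distrib mult.commute)
  finally show ?thesis by simp
qed

lemma converse:
  assumes sch: "mupir_scheme N U K L Qd ans" and K: "K \<ge> 1" and S1: "N + U - 1 \<ge> 1"
  shows "download N U K L Qd ans 0 \<ge> real L * (\<Sum>i<K. 1 / real (N + U - 1) ^ i)"
proof -
  define S where "S = N + U - 1"
  have S1': "S \<ge> 1" using S1 by (simp add: S_def)
  from sch have fQ: "\<And>\<theta>. \<theta> < K \<Longrightarrow> finite (set_pmf (Qd \<theta>))"
    and lQ: "\<And>\<theta> q. \<theta> < K \<Longrightarrow> q \<in> set_pmf (Qd \<theta>) \<Longrightarrow> length q = S"
    and priv: "\<And>s k. s < S \<Longrightarrow> k < K \<Longrightarrow>
          map_pmf (\<lambda>(q, w). (q ! s, ans s (q ! s) w, w)) (joint Qd K L 0) =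
          map_pmf (\<lambda>(q, w). (q ! s, ans s (q ! s) w, w)) (joint Qd K L k)"
    unfolding mupir_scheme_def Let_def S_def by blast+
  from sch obtain dec where dec: "\<And>\<theta> q w. \<theta> < K \<Longrightarrow> q \<in> set_pmf (Qd \<theta>) \<Longrightarrow> w \<in> msg_set K L \<Longrightarrow>
          dec \<theta> q (answers S ans q w) = w ! \<theta>"
    unfolding mupir_scheme_def Let_def S_def by blast
  define M where "M = msg_dist K L"
  have fM: "finite (set_pmf M)" unfolding M_def by (rule fin_msg_dist)
  define p where "p k = pair_pmf (Qd k) M" for k
  have pj: "joint Qd K L k = p k" for k unfolding p_def joint_def M_def by simp
  have finp: "k < K \<Longrightarrow> finite (set_pmf (p k))" for k unfolding p_def using fQ fM by simp
  have setp: "z \<in> set_pmf (p k) \<Longrightarrow> fst z \<in> set_pmf (Qd k) \<and> snd z \<in> msg_set K L" for z k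
    unfolding p_def M_def by auto
  define Aa where "Aa z = answers S ans (fst z) (snd z)" for z :: "nat list \<times> bool list list"
  define An where "An n z = ans n (fst z ! n) (snd z)" for n and z :: "nat list \<times> bool list list"
  have Aa_map: "Aa z = map (\<lambda>s. An s z) [0..<S]" for z unfolding Aa_def An_def answers_def by simp
  have Aa_nth: "n < S \<Longrightarrow> Aa z ! n = An n z" for n z unfolding Aa_map by simp
  define X where "X k = Hn (p k) (\<lambda>z. (Aa z, take k (snd z), fst z)) - Hn (p k) (\<lambda>z. (take k (snd z), fst z))" for k
  define Y where "Y k = Hn (p k) (\<lambda>z. (Aa z, take (Suc k) (snd z), fst z)) - Hn (p k) (\<lambda>z. (take (Suc k) (snd z), fst z))" for k
  have HTQ: "Hn (p k) (\<lambda>z. (take j (snd z), fst z)) = real (j * L) + Hn (Qd k) (\<lambda>x. x)"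
    if k: "k < K" and j: "j \<le> K" for k j
  proof -
    have "Hn (p k) (\<lambda>z. (take j (snd z), fst z)) = Hn (p k) (\<lambda>z. ((\<lambda>x. x) (fst z), take j (snd z)))"
      by (rule Hn_eq[OF finp[OF k]]) auto
    also have "\<dots> = Hn (Qd k) (\<lambda>x. x) + Hn M (take j)"
      unfolding p_def by (rule Hn_indep[OF fQ[OF k] fM])
    finally show ?thesis using Hn_take[OF j, of L] unfolding M_def by simp
  qed
  have step1: "X k = real L + Y k" if k: "k < K" for k
  proof -
    have "Hn (p k) (\<lambda>z. (Aa z, take k (snd z), fst z)) = Hn (p k) (\<lambda>z. (Aa z, take (Suc k) (snd z), fst z))"
    proof (rule Hn_eq[OF finp[OF k]])
      fix z z' assume z: "z \<in> set_pmf (p k)" and z': "z' \<in> set_pmf (p k)"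
      show "((Aa z, take (Suc k) (snd z), fst z) = (Aa z', take (Suc k) (snd z'), fst z')) =
            ((Aa z, take k (snd z), fst z) = (Aa z', take k (snd z'), fst z'))"
      proof
        assume "(Aa z, take (Suc k) (snd z), fst z) = (Aa z', take (Suc k) (snd z'), fst z')"
        then have "take k (take (Suc k) (snd z)) = take k (take (Suc k) (snd z'))" "Aa z = Aa z'" "fst z = fst z'"
          by auto
        then show "(Aa z, take k (snd z), fst z) = (Aa z', take k (snd z'), fst z')" by (simp add: min_def)
      next
        assume h: "(Aa z, take k (snd z), fst z) = (Aa z', take k (snd z'), fst z')"
        have m: "fst z \<in> set_pmf (Qd k)" "snd z \<in> msg_set K L" "fst z' \<in> set_pmf (Qd k)" "snd z' \<in> msg_set K L"
          using setp[OF z] setp[OF z'] by auto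
        have "snd z ! k = dec k (fst z) (Aa z)" using dec[OF k m(1) m(2)] unfolding Aa_def by simp
        also have "\<dots> = dec k (fst z') (Aa z')" using h by simp
        also have "\<dots> = snd z' ! k" using dec[OF k m(3) m(4)] unfolding Aa_def by simp
        finally have nk: "snd z ! k = snd z' ! k" .
        have lk: "k < length (snd z)" "k < length (snd z')" using m k unfolding msg_set_def by auto
        have "take (Suc k) (snd z) = take (Suc k) (snd z')"
          using h nk lk by (simp add: take_Suc_conv_app_nth)
        then show "(Aa z, take (Suc k) (snd z), fst z) = (Aa z', take (Suc k) (snd z'), fst z')"
          using h by simp
      qed
    qed
    then show ?thesis unfolding X_def Y_def using HTQ[OF k, of k] HTQ[OF k, of "Suc k"] k by simp
  qed
  have step2: "real S * Y k \<ge> X (Suc k)" if k: "Suc k < K" for k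
  proof -
    have k': "k < K" using k by simp
    define T where "T z = take (Suc k) (snd z)" for z :: "nat list \<times> bool list list"
    have each: "Y k \<ge> Hn (p (Suc k)) (\<lambda>z. (An n z, T z, fst z)) - Hn (p (Suc k)) (\<lambda>z. (T z, fst z))"
      if n: "n < S" for n
    proof -
      have a: "Y k \<ge> Hn (p k) (\<lambda>z. (An n z, T z, fst z)) - Hn (p k) (\<lambda>z. (T z, fst z))"
      proof -
        have "Hn (p k) (\<lambda>z. (An n z, T z, fst z)) \<le> Hn (p k) (\<lambda>z. (Aa z, T z, fst z))"
          by (rule Hn_mono[OF finp[OF k']]) (auto simp: Aa_nth[OF n, symmetric])
        then show ?thesis unfolding Y_def T_def by simp
      qed
      have b: "Hn (p k) (\<lambda>z. (An n z, T z, fst z)) - Hn (p k) (\<lambda>z. (T z, fst z))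
          \<ge> Hn (p k) (\<lambda>z. (An n z, T z, fst z ! n)) - Hn (p k) (\<lambda>z. (T z, fst z ! n))"
        using indep_step[OF fQ[OF k'] fM, of "ans n" "\<lambda>q. q ! n" "take (Suc k)"]
        unfolding p_def An_def T_def by simp
      define trip where "trip = (\<lambda>(q, w). (q ! n, ans n (q ! n) (w::bool list list), w))"
      have pr: "map_pmf trip (p k) = map_pmf trip (p (Suc k))"
        using priv[OF n k'] priv[OF n k] unfolding trip_def pj by simp
      define F1 where "F1 = (\<lambda>(x::nat, a::bool list, w::bool list list). (a, take (Suc k) w, x))"
      define F2 where "F2 = (\<lambda>(x::nat, a::bool list, w::bool list list). (take (Suc k) w, x))"
      have f1: "(\<lambda>z. F1 (trip z)) = (\<lambda>z. (An n z, T z, fst z ! n))"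
        by (auto simp: F1_def trip_def An_def T_def fun_eq_iff split: prod.split)
      have f2: "(\<lambda>z. F2 (trip z)) = (\<lambda>z. (T z, fst z ! n))"
        by (auto simp: F2_def trip_def T_def fun_eq_iff split: prod.split)
      have c: "Hn (p k) (\<lambda>z. (An n z, T z, fst z ! n)) - Hn (p k) (\<lambda>z. (T z, fst z ! n))
          = Hn (p (Suc k)) (\<lambda>z. (An n z, T z, fst z ! n)) - Hn (p (Suc k)) (\<lambda>z. (T z, fst z ! n))"
        using Hn_transfer[OF pr, of F1] Hn_transfer[OF pr, of F2] unfolding f1 f2 by simp
      have d: "Hn (p (Suc k)) (\<lambda>z. (An n z, T z, fst z)) - Hn (p (Suc k)) (\<lambda>z. (T z, fst z))
          \<le> Hn (p (Suc k)) (\<lambda>z. (An n z, T z, fst z ! n)) - Hn (p (Suc k)) (\<lambda>z. (T z, fst z ! n))"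
        by (rule cond_reduce[OF finp[OF k], of "An n" T fst "\<lambda>q. q ! n"])
      show ?thesis using a b c d by linarith
    qed
    have "real S * Y k = (\<Sum>n<S. Y k)" by simp
    also have "\<dots> \<ge> (\<Sum>n<S. Hn (p (Suc k)) (\<lambda>z. (An n z, T z, fst z)) - Hn (p (Suc k)) (\<lambda>z. (T z, fst z)))"
      by (rule sum_mono) (use each in auto)
    finally have s1: "real S * Y k \<ge> (\<Sum>n<S. Hn (p (Suc k)) (\<lambda>z. (An n z, T z, fst z)) - Hn (p (Suc k)) (\<lambda>z. (T z, fst z)))" .
    have s2: "Hn (p (Suc k)) (\<lambda>z. (map (\<lambda>s. An s z) [0..<S], (T z, fst z))) - Hn (p (Suc k)) (\<lambda>z. (T z, fst z))
        \<le> (\<Sum>n<S. Hn (p (Suc k)) (\<lambda>z. (An n z, (T z, fst z))) - Hn (p (Suc k)) (\<lambda>z. (T z, fst z)))"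
      by (rule subadd[OF finp[OF k]])
    have "X (Suc k) = Hn (p (Suc k)) (\<lambda>z. (map (\<lambda>s. An s z) [0..<S], (T z, fst z))) - Hn (p (Suc k)) (\<lambda>z. (T z, fst z))"
      unfolding X_def T_def Aa_map by simp
    then show ?thesis using s1 s2 by simp
  qed
  have step3: "Y k \<ge> 0" if k: "k < K" for k
    unfolding Y_def by (rule Hn_nonneg_cond[OF finp[OF k], of Aa "\<lambda>z. (take (Suc k) (snd z), fst z)"])
  define G where "G j = (\<Sum>i<j. 1 / real S ^ i)" for j
  have GS: "G (Suc j) = 1 + G j / real S" for j unfolding G_def by (rule G_Suc[OF S1'])
  have Spos: "real S > 0" using S1' by simp
  have ind: "j < K \<Longrightarrow> X (K - 1 - j) \<ge> real L * G (Suc j)" for j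
  proof (induction j)
    case 0
    have "X (K - 1) = real L + Y (K - 1)" using step1[of "K - 1"] K by simp
    moreover have "Y (K - 1) \<ge> 0" using step3[of "K - 1"] K by simp
    ultimately show ?case by (simp add: G_def)
  next
    case (Suc j)
    define k where "k = K - 2 - j"
    have kk: "K - 1 - Suc j = k" "K - 1 - j = Suc k" "Suc k < K" "k < K" using Suc.prems by (auto simp: k_def)
    have IH: "X (Suc k) \<ge> real L * G (Suc j)" using Suc.IH Suc.prems kk by simp
    have "X k = real L + Y k" by (rule step1[OF kk(4)])
    moreover have "real S * Y k \<ge> X (Suc k)" by (rule step2[OF kk(3)])
    ultimately have "X k \<ge> real L + X (Suc k) / real S" using Spos by (simp add: field_simps)
    moreover have "X (Suc k) / real S \<ge> real L * G (Suc j) / real S"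
      using IH Spos by (simp add: divide_right_mono)
    ultimately have "X k \<ge> real L * (1 + G (Suc j) / real S)" by (simp add: algebra_simps)
    then show ?case using kk GS[of "Suc j"] by simp
  qed
  have X0: "X 0 \<ge> real L * G K" using ind[of "K - 1"] K by simp
  have fin0: "finite (set_pmf (p 0))" using finp K by simp
  have c1: "(\<lambda>(q, w). ans s (q ! s) w) = An s" for s by (auto simp: An_def fun_eq_iff)
  have c2: "(\<lambda>(q::nat list, w::bool list list). q) = fst" by (auto simp: fun_eq_iff)
  have "download N U K L Qd ans 0 = (\<Sum>s<S. Hn (p 0) (\<lambda>z. (An s z, fst z)) - Hn (p 0) fst)"
    unfolding download_def S_def[symmetric] cond_ent_def pj c1 c2 Hn_def by simp
  also have "\<dots> \<ge> Hn (p 0) (\<lambda>z. (map (\<lambda>s. An s z) [0..<S], fst z)) - Hn (p 0) fst"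
    using subadd[OF fin0, of An S fst] by simp
  finally have d0: "download N U K L Qd ans 0 \<ge> Hn (p 0) (\<lambda>z. (map (\<lambda>s. An s z) [0..<S], fst z)) - Hn (p 0) fst" .
  have "X 0 = Hn (p 0) (\<lambda>z. (map (\<lambda>s. An s z) [0..<S], fst z)) - Hn (p 0) fst"
  proof -
    have "Hn (p 0) (\<lambda>z. (Aa z, take 0 (snd z), fst z)) = Hn (p 0) (\<lambda>z. (map (\<lambda>s. An s z) [0..<S], fst z))"
      by (rule Hn_eq[OF fin0]) (auto simp: Aa_map)
    moreover have "Hn (p 0) (\<lambda>z. (take 0 (snd z), fst z)) = Hn (p 0) fst"
      by (rule Hn_eq[OF fin0]) auto
    ultimately show ?thesis unfolding X_def by simp
  qed
  then show ?thesis using d0 X0 unfolding G_def S_def by simp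
qed



lemma cond_pair:
  assumes fP: "finite (set_pmf P)" and fM: "finite (set_pmf M)"
  shows "Hn (pair_pmf P M) (\<lambda>z. (g (fst z) (snd z), fst z)) - Hn (pair_pmf P M) fst
       = (\<Sum>q\<in>set_pmf P. pmf P q * ent (map_pmf (g q) M))"
proof -
  define p where "p = pair_pmf P M"
  have fin: "finite (set_pmf p)" using fP fM by (simp add: p_def)
  define R where "R = map_pmf (\<lambda>z. (g (fst z) (snd z), fst z)) p"
  have sM: "sum (pmf M) (set_pmf M) = 1" by (rule sum_pmf_eq_1) (auto simp: fM)
  have pR: "pmf R (g q w, q) = pmf P q * pmf (map_pmf (g q) M) (g q w)"
    if q: "q \<in> set_pmf P" and w: "w \<in> set_pmf M" for q w
  proof -
    have "pmf R (g q w, q) = (\<Sum>z\<in>{z\<in>set_pmf p. (g (fst z) (snd z), fst z) = (g q w, q)}. pmf p z)"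
      unfolding R_def by (rule pmf_map_sum[OF fin])
    also have "{z\<in>set_pmf p. (g (fst z) (snd z), fst z) = (g q w, q)}
        = (\<lambda>w'. (q, w')) ` {w'\<in>set_pmf M. g q w' = g q w}"
      using q by (auto simp: p_def)
    also have "(\<Sum>z\<in>(\<lambda>w'. (q, w')) ` {w'\<in>set_pmf M. g q w' = g q w}. pmf p z)
        = (\<Sum>w'\<in>{w'\<in>set_pmf M. g q w' = g q w}. pmf P q * pmf M w')"
      by (subst sum.reindex) (auto simp: inj_on_def p_def pmf_pair)
    also have "\<dots> = pmf P q * pmf (map_pmf (g q) M) (g q w)"
      by (simp add: pmf_map_sum[OF fM] sum_distrib_left)
    finally show ?thesis .
  qed
  have "Hn p (\<lambda>z. (g (fst z) (snd z), fst z))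
      = - (\<Sum>q\<in>set_pmf P. \<Sum>w\<in>set_pmf M. pmf P q * pmf M w * log 2 (pmf P q * pmf (map_pmf (g q) M) (g q w)))"
  proof -
    have "(\<Sum>\<omega>\<in>set_pmf p. pmf p \<omega> * log 2 (pmf R (g (fst \<omega>) (snd \<omega>), fst \<omega>)))
        = (\<Sum>(q,w)\<in>set_pmf P \<times> set_pmf M. pmf P q * pmf M w * log 2 (pmf P q * pmf (map_pmf (g q) M) (g q w)))"
      unfolding p_def set_pair_pmf by (rule sum.cong) (auto simp: pR pmf_pair)
    then show ?thesis
      unfolding Hn_expect[OF fin] R_def[symmetric] by (simp add: sum.cartesian_product)
  qed
  also have "\<dots> = - (\<Sum>q\<in>set_pmf P. \<Sum>w\<in>set_pmf M. pmf M w * (pmf P q * log 2 (pmf P q))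
         + pmf P q * (pmf M w * log 2 (pmf (map_pmf (g q) M) (g q w))))"
  proof (intro arg_cong[where f=uminus] sum.cong refl)
    fix q w assume q: "q \<in> set_pmf P" and w: "w \<in> set_pmf M"
    have a: "pmf P q > 0" using q by (simp add: pmf_positive)
    have b: "pmf (map_pmf (g q) M) (g q w) > 0" by (rule pmf_map_pos[OF w])
    show "pmf P q * pmf M w * log 2 (pmf P q * pmf (map_pmf (g q) M) (g q w)) =
       pmf M w * (pmf P q * log 2 (pmf P q)) + pmf P q * (pmf M w * log 2 (pmf (map_pmf (g q) M) (g q w)))"
      using a b by (simp add: log_mult algebra_simps)
  qed
  also have "\<dots> = - (\<Sum>q\<in>set_pmf P. pmf P q * log 2 (pmf P q))
       + (\<Sum>q\<in>set_pmf P. pmf P q * ent (map_pmf (g q) M))"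
    by (simp add: sum.distrib sum_distrib_left[symmetric] sum_distrib_right[symmetric] sM
          ent_expect[OF fM] sum_negf)
  finally have h1: "Hn p (\<lambda>z. (g (fst z) (snd z), fst z)) = ent P + (\<Sum>q\<in>set_pmf P. pmf P q * ent (map_pmf (g q) M))"
    unfolding ent_def by simp
  have h2: "Hn p fst = ent P" unfolding p_def Hn_def by (simp add: map_fst_pair_pmf)
  show ?thesis using h1 h2 unfolding p_def by simp
qed



definition vecs :: "nat \<Rightarrow> nat \<Rightarrow> nat list set" where
  "vecs S K = {f. set f \<subseteq> {..<S} \<and> length f = K}"
definition shiftv :: "nat \<Rightarrow> nat \<Rightarrow> nat \<Rightarrow> nat list \<Rightarrow> nat list" where
  "shiftv S th n f = f[th := (f ! th + n) mod S]"
definition termb :: "nat list \<Rightarrow> bool list list \<Rightarrow> nat \<Rightarrow> bool" where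
  "termb v w k = (v ! k \<noteq> 0 \<and> (w ! k) ! (v ! k - 1))"
definition par :: "nat \<Rightarrow> nat list \<Rightarrow> bool list list \<Rightarrow> bool" where
  "par K v w = odd (card {k. k < K \<and> termb v w k})"

lemma vecs_fin: "finite (vecs S K)"
  unfolding vecs_def by (rule finite_lists_length_eq) simp

lemma card_vecs: "card (vecs S K) = S ^ K"
  unfolding vecs_def by (simp add: card_lists_length_eq)

lemma zero_vecs: "S > 0 \<Longrightarrow> replicate K 0 \<in> vecs S K"
  unfolding vecs_def by auto

lemma vecs_ne: "S > 0 \<Longrightarrow> vecs S K \<noteq> {}"
  using zero_vecs by auto

lemma vecs_nth: "f \<in> vecs S K \<Longrightarrow> k < K \<Longrightarrow> f ! k < S"
proof -
  assume f: "f \<in> vecs S K" and k: "k < K"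
  have "f ! k \<in> set f" using f k unfolding vecs_def by simp
  then show "f ! k < S" using f unfolding vecs_def by blast
qed

lemma shift_in: "S > 0 \<Longrightarrow> f \<in> vecs S K \<Longrightarrow> shiftv S th n f \<in> vecs S K"
proof -
  assume S: "S > 0" and f: "f \<in> vecs S K"
  have "set (f[th := (f ! th + n) mod S]) \<subseteq> insert ((f ! th + n) mod S) (set f)"
    by (rule set_update_subset_insert)
  also have "\<dots> \<subseteq> {..<S}" using f S unfolding vecs_def by simp
  finally show ?thesis using f unfolding vecs_def shiftv_def by simp
qed

lemma mod_lt2:
  fixes x S :: nat
  assumes x2: "x < 2 * S"
  shows "x mod S = (if x < S then x else x - S)"
proof (cases "x < S")
  case True then show ?thesis by simp
next
  case False
  then have "x mod S = (x - S) mod S" by (intro le_mod_geq) simp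
  also have "\<dots> = x - S" using False x2 by (intro mod_less) linarith
  finally show ?thesis using False by simp
qed

lemma mod_shift_inj:
  fixes a b n S :: nat
  assumes a: "a < S" and b: "b < S" and e: "(a + n) mod S = (b + n) mod S"
  shows "a = b"
proof -
  have S: "S > 0" using a by simp
  define m where "m = n mod S"
  have m: "m < S" using S by (simp add: m_def)
  have "(a + n) mod S = (a + m) mod S" unfolding m_def by (simp add: mod_add_right_eq)
  moreover have "(b + n) mod S = (b + m) mod S" unfolding m_def by (simp add: mod_add_right_eq)
  ultimately have "(a + m) mod S = (b + m) mod S" using e by simp
  then show ?thesis using mod_lt2[of "a + m" S] mod_lt2[of "b + m" S] a b m
    by (auto split: if_splits)
qed

lemma shift_inj: "th < K \<Longrightarrow> inj_on (shiftv S th n) (vecs S K)"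
proof (rule inj_onI)
  fix f g assume th: "th < K" and f: "f \<in> vecs S K" and g: "g \<in> vecs S K"
    and e: "shiftv S th n f = shiftv S th n g"
  have lf: "length f = K" "length g = K" using f g by (auto simp: vecs_def)
  have a: "f ! th < S" "g ! th < S" using vecs_nth[OF f th] vecs_nth[OF g th] by auto
  have "(f ! th + n) mod S = (g ! th + n) mod S"
    using arg_cong[OF e, of "\<lambda>x. x ! th"] th lf by (simp add: shiftv_def)
  then have eth: "f ! th = g ! th" by (rule mod_shift_inj[OF a(1) a(2)])
  show "f = g"
  proof (rule nth_equalityI)
    show "length f = length g" using lf by simp
    fix i assume i: "i < length f"
    show "f ! i = g ! i"
    proof (cases "i = th")
      case True then show ?thesis using eth by simp
    next
      case False
      then show ?thesis using arg_cong[OF e, of "\<lambda>x. x ! i"] by (simp add: shiftv_def)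
    qed
  qed
qed

lemma shift_img: "S > 0 \<Longrightarrow> th < K \<Longrightarrow> shiftv S th n ` vecs S K = vecs S K"
proof -
  assume S: "S > 0" and th: "th < K"
  show ?thesis
  proof (rule card_subset_eq[OF vecs_fin])
    show "shiftv S th n ` vecs S K \<subseteq> vecs S K" using shift_in[OF S] by blast
    show "card (shiftv S th n ` vecs S K) = card (vecs S K)"
      by (rule card_image[OF shift_inj[OF th]])
  qed
qed

lemma map_shift:
  assumes "S > 0" "th < K"
  shows "map_pmf (shiftv S th n) (pmf_of_set (vecs S K)) = pmf_of_set (vecs S K)"
  using map_pmf_of_set_inj[OF shift_inj[OF assms(2)] vecs_ne[OF assms(1)] vecs_fin] shift_img[OF assms]
  by simp

lemma par_split:
  assumes th: "th < K"
  shows "par K v w = (odd (card {k. k < K \<and> k \<noteq> th \<and> termb v w k}) \<noteq> termb v w th)"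
proof -
  define C' where "C' = {k. k < K \<and> k \<noteq> th \<and> termb v w k}"
  have fC: "finite C'" unfolding C'_def by simp
  show ?thesis
  proof (cases "termb v w th")
    case True
    then have "{k. k < K \<and> termb v w k} = insert th C'" using th unfolding C'_def by auto
    moreover have "th \<notin> C'" unfolding C'_def by simp
    ultimately show ?thesis using True fC unfolding par_def C'_def[symmetric] by simp
  next
    case False
    then have "{k. k < K \<and> termb v w k} = C'" unfolding C'_def by auto
    then show ?thesis using False unfolding par_def C'_def[symmetric] by simp
  qed
qed

lemma ent_return: "ent (return_pmf x) = 0"
  unfolding ent_def by simp

lemma ent_par:
  assumes S: "S > 0" and v: "v \<in> vecs S K"
  shows "Hn (msg_dist K (S - 1)) (\<lambda>w. [par K v w]) = (if v = replicate K 0 then 0 else 1)"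
proof (cases "v = replicate K 0")
  case True
  have e: "{k. k < K \<and> termb v w k} = {}" for w using True unfolding termb_def by auto
  have "par K v w = False" for w unfolding par_def by (simp only: e card.empty) simp
  then show ?thesis using True unfolding Hn_def by (simp add: ent_return)
next
  case False
  define L where "L = S - 1"
  define M where "M = msg_dist K L"
  have lv: "length v = K" using v by (simp add: vecs_def)
  obtain k0 where k0: "k0 < K" "v ! k0 \<noteq> 0"
  proof -
    have "\<exists>k0<K. v ! k0 \<noteq> 0"
    proof (rule ccontr)
      assume "\<not> ?thesis"
      then have "v = replicate K 0" using lv by (intro nth_equalityI) auto
      then show False using False by simp
    qed
    then show ?thesis using that by blast
  qed
  define i0 where "i0 = v ! k0 - 1"
  have i0: "i0 < L" using vecs_nth[OF v k0(1)] k0(2) unfolding i0_def L_def by simp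
  define \<sigma> where "\<sigma> w = w[k0 := (w ! k0)[i0 := \<not> (w ! k0) ! i0]]" for w :: "bool list list"
  have \<sigma>_in: "\<sigma> w \<in> msg_set K L" if w: "w \<in> msg_set K L" for w
    unfolding msg_set_def
  proof (intro CollectI conjI allI impI)
    show "length (\<sigma> w) = K" using w unfolding \<sigma>_def msg_set_def by simp
    fix k assume k: "k < K"
    show "length (\<sigma> w ! k) = L"
    proof (cases "k = k0")
      case True then show ?thesis using w k unfolding \<sigma>_def msg_set_def by simp
    next
      case False then show ?thesis using w k unfolding \<sigma>_def msg_set_def by simp
    qed
  qed
  have \<sigma>\<sigma>: "\<sigma> (\<sigma> w) = w" if w: "w \<in> msg_set K L" for w
  proof -
    have "length w = K" "length (w ! k0) = L" using w k0 unfolding msg_set_def by auto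
    then show ?thesis unfolding \<sigma>_def using k0 i0 by (simp add: list_update_overwrite)
  qed
  have inj: "inj_on \<sigma> (msg_set K L)" by (metis \<sigma>\<sigma> inj_onI)
  have img: "\<sigma> ` msg_set K L = msg_set K L"
  proof (intro equalityI subsetI)
    fix x assume "x \<in> \<sigma> ` msg_set K L"
    then show "x \<in> msg_set K L" using \<sigma>_in by blast
  next
    fix x assume x: "x \<in> msg_set K L"
    then have "x = \<sigma> (\<sigma> x)" using \<sigma>\<sigma> by simp
    then show "x \<in> \<sigma> ` msg_set K L" using \<sigma>_in[OF x] by (rule image_eqI)
  qed
  have Mfix: "map_pmf \<sigma> M = M"
    unfolding M_def msg_dist_def using map_pmf_of_set_inj[OF inj msg_ne finite_msg] img by simp
  have flip: "par K v (\<sigma> w) = (\<not> par K v w)" if w: "w \<in> msg_set K L" for w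
  proof -
    have lw: "length w = K" "length (w ! k0) = L" using w k0 unfolding msg_set_def by auto
    have same: "{k. k < K \<and> k \<noteq> k0 \<and> termb v (\<sigma> w) k} = {k. k < K \<and> k \<noteq> k0 \<and> termb v w k}"
      unfolding termb_def \<sigma>_def by auto
    have t: "termb v (\<sigma> w) k0 = (\<not> termb v w k0)"
    proof -
      have ii: "v ! k0 - Suc 0 = i0" unfolding i0_def by simp
      show ?thesis unfolding termb_def \<sigma>_def using lw k0 i0 by (simp add: ii)
    qed
    show ?thesis using par_split[OF k0(1), of v "\<sigma> w"] par_split[OF k0(1), of v w] same t by simp
  qed
  define B where "B = map_pmf (par K v) M"
  have "B = map_pmf (par K v) (map_pmf \<sigma> M)" unfolding B_def Mfix ..
  also have "\<dots> = map_pmf (\<lambda>w. \<not> par K v w) M"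
    unfolding map_pmf_comp by (rule map_pmf_cong) (auto simp: flip M_def)
  also have "\<dots> = map_pmf Not B" unfolding B_def map_pmf_comp ..
  finally have BN: "B = map_pmf Not B" .
  have eqTF: "pmf B True = pmf B False"
  proof -
    have "pmf B True = pmf (map_pmf Not B) (Not False)" using BN by simp
    also have "\<dots> = pmf B False" by (rule pmf_map_inj') (simp add: inj_def)
    finally show ?thesis .
  qed
  have sum1: "pmf B True + pmf B False = 1"
  proof -
    have "sum (pmf B) (UNIV :: bool set) = 1" by (rule sum_pmf_eq_1) auto
    then show ?thesis by (simp add: UNIV_bool)
  qed
  have half: "pmf B True = 1/2" "pmf B False = 1/2" using eqTF sum1 by auto
  have setB: "set_pmf B = {True, False}"
    using half by (auto simp: set_pmf_iff)
  have entB: "ent B = 1"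
    unfolding ent_def setB by (simp add: half log_divide)
  have finM: "finite (set_pmf M)" unfolding M_def by (rule fin_msg_dist)
  have "Hn M (\<lambda>w. [par K v w]) = Hn M (par K v)"
    by (rule Hn_eq[OF finM]) auto
  then have "Hn M (\<lambda>w. [par K v w]) = 1" using entB unfolding Hn_def B_def by simp
  then show ?thesis using False unfolding M_def L_def by simp
qed



definition qlist :: "nat \<Rightarrow> nat \<Rightarrow> nat list \<Rightarrow> nat list" where
  "qlist S th f = map (\<lambda>n. list_encode (shiftv S th n f)) [0..<S]"
definition qd :: "nat \<Rightarrow> nat \<Rightarrow> nat \<Rightarrow> nat list pmf" where
  "qd S K th = map_pmf (qlist S th) (pmf_of_set (vecs S K))"
definition ansv :: "nat \<Rightarrow> nat \<Rightarrow> nat \<Rightarrow> bool list list \<Rightarrow> bool list" where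
  "ansv K s x w = [par K (list_decode x) w]"
definition decv :: "nat \<Rightarrow> nat \<Rightarrow> nat list \<Rightarrow> bool list list \<Rightarrow> bool list" where
  "decv S th q as = map (\<lambda>j. hd (as ! ((j + 1 + S - list_decode (q ! 0) ! th) mod S))
        \<noteq> hd (as ! ((S - list_decode (q ! 0) ! th) mod S))) [0..<S - 1]"

lemma cond_ent_Hn: "cond_ent p X Y = Hn p (\<lambda>z. (X z, Y z)) - Hn p Y"
  unfolding cond_ent_def Hn_def ..

lemma qlist_nth: "s < S \<Longrightarrow> qlist S th f ! s = list_encode (shiftv S th s f)"
  unfolding qlist_def by simp

lemma set_qd: "S > 0 \<Longrightarrow> set_pmf (qd S K th) = qlist S th ` vecs S K"
  unfolding qd_def using vecs_fin vecs_ne by simp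

lemma fin_qd: "S > 0 \<Longrightarrow> finite (set_pmf (qd S K th))"
  using set_qd vecs_fin by simp

lemma shift_nth_th: "th < length f \<Longrightarrow> shiftv S th n f ! th = (f ! th + n) mod S"
  unfolding shiftv_def by simp

lemma shift_nth_other: "k \<noteq> th \<Longrightarrow> shiftv S th n f ! k = f ! k"
  unfolding shiftv_def by simp

lemma priv_form:
  assumes S: "S > 0" and s: "s < S" and th: "th < K"
  shows "map_pmf (\<lambda>(q, w). (q ! s, ansv K s (q ! s) w, w)) (joint (qd S K) K L th)
    = map_pmf (\<lambda>(g, w). (list_encode g, ansv K s (list_encode g) w, w)) (pair_pmf (pmf_of_set (vecs S K)) (msg_dist K L))"
proof -
  define U where "U = pmf_of_set (vecs S K)"
  define M where "M = msg_dist K L"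
  define H where "H = (\<lambda>(g, w). (list_encode g, ansv K s (list_encode g) w, (w::bool list list)))"
  define tr where "tr = (\<lambda>(q, w). (q ! s, ansv K s (q ! s) w, (w::bool list list)))"
  have "joint (qd S K) K L th = map_pmf (apfst (qlist S th)) (pair_pmf U M)"
    unfolding joint_def qd_def U_def M_def by (rule pair_map_pmf1)
  then have "map_pmf tr (joint (qd S K) K L th) = map_pmf (\<lambda>z. tr (apfst (qlist S th) z)) (pair_pmf U M)"
    by (simp add: map_pmf_comp)
  also have "\<dots> = map_pmf (\<lambda>z. H (apfst (shiftv S th s) z)) (pair_pmf U M)"
    by (rule map_pmf_cong) (auto simp: tr_def H_def qlist_nth[OF s])
  also have "\<dots> = map_pmf H (map_pmf (apfst (shiftv S th s)) (pair_pmf U M))"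
    by (simp add: map_pmf_comp)
  also have "map_pmf (apfst (shiftv S th s)) (pair_pmf U M) = pair_pmf (map_pmf (shiftv S th s) U) M"
    by (rule pair_map_pmf1[symmetric])
  also have "map_pmf (shiftv S th s) U = U" unfolding U_def by (rule map_shift[OF S th])
  finally show ?thesis unfolding tr_def H_def U_def M_def .
qed

lemma correct_v:
  assumes S: "S \<ge> 2" and th: "th < K" and f: "f \<in> vecs S K" and w: "w \<in> msg_set K (S - 1)"
  shows "decv S th (qlist S th f) (answers S (ansv K) (qlist S th f) w) = w ! th"
proof -
  define as where "as = answers S (ansv K) (qlist S th f) w"
  have lf: "length f = K" using f by (simp add: vecs_def)
  have asn: "n < S \<Longrightarrow> as ! n = [par K (shiftv S th n f) w]" for n
    unfolding as_def answers_def ansv_def by (simp add: qlist_nth)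
  have d: "list_decode (qlist S th f ! 0) ! th = f ! th"
    using S th lf vecs_nth[OF f th] by (simp add: qlist_nth shift_nth_th)
  define d0 where "d0 = f ! th"
  have d0S: "d0 < S" unfolding d0_def by (rule vecs_nth[OF f th])
  have lw: "length (w ! th) = S - 1" using w th unfolding msg_set_def by simp
  define P where "P = odd (card {k. k < K \<and> k \<noteq> th \<and> termb f w k})"
  have parv: "par K (shiftv S th n f) w = (P \<noteq> termb (shiftv S th n f) w th)" for n
  proof -
    have "{k. k < K \<and> k \<noteq> th \<and> termb (shiftv S th n f) w k} = {k. k < K \<and> k \<noteq> th \<and> termb f w k}"
      unfolding termb_def by (auto simp: shift_nth_other)
    then show ?thesis using par_split[OF th, of "shiftv S th n f" w] unfolding P_def by simp
  qed
  have n0: "(S - d0) mod S < S" "shiftv S th ((S - d0) mod S) f ! th = 0"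
  proof -
    show "(S - d0) mod S < S" using S by simp
    have "(d0 + (S - d0) mod S) mod S = (d0 + (S - d0)) mod S" by (simp add: mod_add_right_eq)
    also have "\<dots> = 0" using d0S by simp
    finally show "shiftv S th ((S - d0) mod S) f ! th = 0"
      using th lf by (simp add: shift_nth_th d0_def)
  qed
  have nj: "(j + 1 + S - d0) mod S < S" "shiftv S th ((j + 1 + S - d0) mod S) f ! th = j + 1"
    if j: "j < S - 1" for j
  proof -
    show "(j + 1 + S - d0) mod S < S" using S by simp
    have "(d0 + (j + 1 + S - d0) mod S) mod S = (d0 + (j + 1 + S - d0)) mod S" by (simp add: mod_add_right_eq)
    also have "d0 + (j + 1 + S - d0) = (j + 1) + S" using d0S by simp
    also have "((j + 1) + S) mod S = j + 1"
    proof -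
      have A: "((j + 1) + S) mod S = (j + 1) mod S" by (rule mod_add_self2)
      have B: "(j + 1) mod S = j + 1" using j by (intro mod_less) linarith
      show ?thesis by (rule trans[OF A B])
    qed
    finally show "shiftv S th ((j + 1 + S - d0) mod S) f ! th = j + 1"
      using th lf by (simp add: shift_nth_th d0_def)
  qed
  have "decv S th (qlist S th f) as = map (\<lambda>j. (w ! th) ! j) [0..<S - 1]"
  proof -
    have "hd (as ! ((j + 1 + S - d0) mod S)) \<noteq> hd (as ! ((S - d0) mod S)) \<longleftrightarrow> (w ! th) ! j"
      if j: "j < S - 1" for j
    proof -
      have t0: "termb (shiftv S th ((S - d0) mod S) f) w th = False"
        unfolding termb_def using n0 by simp
      have tj: "termb (shiftv S th ((j + 1 + S - d0) mod S) f) w th = (w ! th) ! j"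
        unfolding termb_def using nj[OF j] by simp
      show ?thesis using asn[OF n0(1)] asn[OF nj(1)[OF j]] parv t0 tj by (cases P) simp_all
    qed
    then show ?thesis unfolding decv_def d d0_def[symmetric] by simp
  qed
  also have "\<dots> = w ! th" using lw by (metis map_nth)
  finally show ?thesis unfolding as_def .
qed

lemma download_v:
  assumes S: "S \<ge> 2" and th: "th < K" and SNU: "S = N + U - 1"
  shows "download N U K (S - 1) (qd S K) (ansv K) th = real S * ((real S ^ K - 1) / real S ^ K)"
proof -
  define U' where "U' = pmf_of_set (vecs S K)"
  define M where "M = msg_dist K (S - 1)"
  have S0: "S > 0" using S by simp
  have fU: "finite (set_pmf U')" unfolding U'_def using vecs_fin vecs_ne[OF S0] by simp
  have fM: "finite (set_pmf M)" unfolding M_def by (rule fin_msg_dist)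
  have fQ: "finite (set_pmf (qd S K th))" by (rule fin_qd[OF S0])
  have cV: "real (card (vecs S K)) = real S ^ K" by (simp add: card_vecs)
  have each: "cond_ent (joint (qd S K) K (S - 1) th) (\<lambda>(q, w). ansv K s (q ! s) w) (\<lambda>(q, w). q)
      = (real S ^ K - 1) / real S ^ K" if s: "s < S" for s
  proof -
    define g where "g q w = ansv K s (q ! s) w" for q w
    have "cond_ent (joint (qd S K) K (S - 1) th) (\<lambda>(q, w). ansv K s (q ! s) w) (\<lambda>(q, w). q)
        = Hn (pair_pmf (qd S K th) M) (\<lambda>z. (g (fst z) (snd z), fst z)) - Hn (pair_pmf (qd S K th) M) fst"
      unfolding cond_ent_Hn joint_def M_def
      by (intro arg_cong2[where f="(-)"] Hn_cong) (auto simp: g_def split: prod.splits)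
    also have "\<dots> = (\<Sum>q\<in>set_pmf (qd S K th). pmf (qd S K th) q * ent (map_pmf (g q) M))"
      by (rule cond_pair[OF fQ fM])
    also have "\<dots> = (\<Sum>f\<in>set_pmf U'. pmf U' f * ent (map_pmf (g (qlist S th f)) M))"
      unfolding qd_def U'_def[symmetric]
      using sum_map_pmf[OF fU, of "\<lambda>q. ent (map_pmf (g q) M)" "qlist S th"] by simp
    also have "\<dots> = (\<Sum>f\<in>vecs S K. (1 / real S ^ K) * (if shiftv S th s f = replicate K 0 then 0 else 1))"
    proof -
      have "ent (map_pmf (g (qlist S th f)) M) = (if shiftv S th s f = replicate K 0 then 0 else 1)"
        if f: "f \<in> vecs S K" for f
      proof -
        have "map_pmf (g (qlist S th f)) M = map_pmf (\<lambda>w. [par K (shiftv S th s f) w]) M"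
          by (intro map_pmf_cong refl) (simp add: g_def ansv_def qlist_nth[OF s])
        then show ?thesis using ent_par[OF S0 shift_in[OF S0 f, of th s]] unfolding Hn_def M_def by simp
      qed
      then show ?thesis unfolding U'_def using vecs_fin vecs_ne[OF S0] cV
        by (intro sum.cong) auto
    qed
    also have "\<dots> = (1 / real S ^ K) * (\<Sum>f\<in>vecs S K. (if shiftv S th s f = replicate K 0 then 0 else 1))"
      by (simp add: sum_distrib_left)
    also have "(\<Sum>f\<in>vecs S K. (if shiftv S th s f = replicate K 0 then 0 else 1))
        = (\<Sum>g\<in>vecs S K. (if g = replicate K 0 then 0 else (1::real)))"
    proof -
      have bij: "bij_betw (shiftv S th s) (vecs S K) (vecs S K)"
        unfolding bij_betw_def using shift_inj[OF th] shift_img[OF S0 th] by simp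
      show ?thesis by (rule sum.reindex_bij_betw[OF bij])
    qed
    also have "(\<Sum>g\<in>vecs S K. (if g = replicate K 0 then 0 else (1::real))) = real S ^ K - 1"
    proof -
      define h where "h g = (if g = replicate K 0 then 0 else (1::real))" for g :: "nat list"
      have z: "replicate K 0 \<in> vecs S K" by (rule zero_vecs[OF S0])
      have "sum h (vecs S K - {replicate K 0}) = sum h (vecs S K) - h (replicate K 0)"
        using sum_diff1[OF vecs_fin, where f=h and a="replicate K 0"] z by simp
      moreover have "sum h (vecs S K - {replicate K 0}) = real (card (vecs S K - {replicate K 0}))"
        by (simp add: h_def)
      moreover have "real (card (vecs S K - {replicate K 0})) = real S ^ K - 1"
      proof -
        have "1 \<le> S ^ K" using S0 by simp
        then show ?thesis using z vecs_fin by (simp add: card_vecs of_nat_diff)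
      qed
      ultimately show ?thesis unfolding h_def by simp
    qed
    finally show ?thesis by simp
  qed
  have "download N U K (S - 1) (qd S K) (ansv K) th = (\<Sum>s<S. (real S ^ K - 1) / real S ^ K)"
    unfolding download_def SNU[symmetric] using each by (intro sum.cong) auto
  then show ?thesis by simp
qed



lemma scheme_v:
  assumes S: "S \<ge> 2" and SNU: "S = N + U - 1" and K: "K \<ge> 1"
  shows "mupir_scheme N U K (S - 1) (qd S K) (ansv K)"
proof -
  have S0: "S > 0" using S by simp
  have A: "\<forall>\<theta><K. finite (set_pmf (qd S K \<theta>)) \<and> (\<forall>q\<in>set_pmf (qd S K \<theta>). length q = S)"
    using fin_qd[OF S0] set_qd[OF S0] by (auto simp: qlist_def)
  have B: "\<forall>s<S. \<forall>k<K.
          map_pmf (\<lambda>(q, w). (q ! s, ansv K s (q ! s) w, w)) (joint (qd S K) K (S - 1) 0) =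
          map_pmf (\<lambda>(q, w). (q ! s, ansv K s (q ! s) w, w)) (joint (qd S K) K (S - 1) k)"
    using priv_form[OF S0] K by simp
  have C: "\<forall>\<theta><K. \<forall>q\<in>set_pmf (qd S K \<theta>). \<forall>w\<in>msg_set K (S - 1).
          decv S \<theta> q (answers S (ansv K) q w) = w ! \<theta>"
    using correct_v[OF S] set_qd[OF S0] by auto
  show ?thesis unfolding mupir_scheme_def Let_def SNU[symmetric] using A B C by blast
qed

lemma geom_inv:
  fixes S :: nat and K :: nat
  assumes S: "S \<ge> 2" and K: "K \<ge> 1"
  shows "real (S - 1) / (real S * ((real S ^ K - 1) / real S ^ K)) = inverse (\<Sum>i<K. 1 / real S ^ i)"
proof -
  define x where "x = real S"
  have x2: "x \<ge> 2" using S by (simp add: x_def)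
  have xK: "x ^ K \<ge> x" using x2 K by (metis power_increasing power_one_right one_le_numeral order_trans)
  then have xK1: "x ^ K - 1 > 0" using x2 by simp
  have "(\<Sum>i<K. 1 / x ^ i) = (\<Sum>i<K. (1 / x) ^ i)" by (simp add: power_one_over)
  also have "\<dots> = (1 - (1 / x) ^ K) / (1 - 1 / x)" using x2 by (simp add: sum_gp_strict)
  finally have g: "(\<Sum>i<K. 1 / x ^ i) = (1 - (1 / x) ^ K) / (1 - 1 / x)" .
  have "real (S - 1) = x - 1" using S by (simp add: x_def of_nat_diff)
  moreover have "(x - 1) / (x * ((x ^ K - 1) / x ^ K)) = inverse ((1 - (1 / x) ^ K) / (1 - 1 / x))"
    using x2 xK1 by (simp add: field_simps power_one_over)
  ultimately show ?thesis using g unfolding x_def by simp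
qed

lemma rate_v:
  assumes S: "S \<ge> 2" and SNU: "S = N + U - 1" and K: "K \<ge> 1"
  shows "mupir_rate N U K (S - 1) (qd S K) (ansv K) = inverse (\<Sum>i<K. 1 / real S ^ i)"
proof -
  define D where "D = real S * ((real S ^ K - 1) / real S ^ K)"
  have "(\<lambda>\<theta>. download N U K (S - 1) (qd S K) (ansv K) \<theta>) ` {..<K} = {D}"
    using download_v[OF S _ SNU] K unfolding D_def by force
  then have "(MAX \<theta>\<in>{..<K}. download N U K (S - 1) (qd S K) (ansv K) \<theta>) = D" by simp
  then show ?thesis unfolding mupir_rate_def D_def using geom_inv[OF S K] by simp
qed

lemma msg1_inj:
  assumes w: "w \<in> msg_set K 1"
  shows "map (\<lambda>x. [x]) (map hd w) = w"
proof (rule nth_equalityI)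
  show "length (map (\<lambda>x. [x]) (map hd w)) = length w" by simp
  fix i assume i: "i < length (map (\<lambda>x. [x]) (map hd w))"
  then have "length (w ! i) = 1" using w unfolding msg_set_def by auto
  then show "map (\<lambda>x. [x]) (map hd w) ! i = w ! i" using i by (cases "w ! i") auto
qed

lemma mem_rates:
  "mupir_scheme N U K L Qd ans \<Longrightarrow> mupir_rate N U K L Qd ans = c \<Longrightarrow>
   c \<in> {mupir_rate N U K L Qd ans | L Qd ans. mupir_scheme N U K L Qd ans}"
  by blast

lemma scheme_1:
  assumes SNU: "N + U - 1 = 1" and K: "K \<ge> 1"
  shows "mupir_scheme N U K 1 (\<lambda>_. return_pmf [0]) (\<lambda>s x w. map hd w)"
proof -
  have C: "\<forall>\<theta><K. \<forall>q\<in>set_pmf (return_pmf [0::nat]). \<forall>w\<in>msg_set K 1.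
          (\<lambda>\<theta> q as. [(as ! 0) ! \<theta>]) \<theta> q (answers 1 (\<lambda>s x w. map hd w) q w) = w ! \<theta>"
  proof (intro allI impI ballI)
    fix \<theta> q w assume th: "\<theta> < K" and w: "w \<in> msg_set K 1"
    have "map (\<lambda>x. [x]) (map hd w) ! \<theta> = w ! \<theta>" using msg1_inj[OF w] by simp
    moreover have "length w = K" using w by (simp add: msg_set_def)
    ultimately show "(\<lambda>\<theta> q as. [(as ! 0) ! \<theta>]) \<theta> q (answers 1 (\<lambda>s x w. map hd w) q w) = w ! \<theta>"
      using th by (simp add: answers_def)
  qed
  have C': "\<exists>dec. \<forall>\<theta><K. \<forall>q\<in>set_pmf (return_pmf [0::nat]). \<forall>w\<in>msg_set K 1.
          dec \<theta> q (answers 1 (\<lambda>s x w. map hd w) q w) = w ! \<theta>"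
    apply (rule exI[of _ "\<lambda>\<theta> q as. [(as ! 0) ! \<theta>]"])
    using C by simp
  have A: "\<forall>\<theta><K. finite (set_pmf (return_pmf [0::nat])) \<and> (\<forall>q\<in>set_pmf (return_pmf [0::nat]). length q = 1)"
    by simp
  have B: "\<forall>s<1. \<forall>k<K.
          map_pmf (\<lambda>(q, w). (q ! s, map hd w, w)) (joint (\<lambda>_. return_pmf [0::nat]) K 1 0) =
          map_pmf (\<lambda>(q, w). (q ! s, map hd w, w)) (joint (\<lambda>_. return_pmf [0::nat]) K 1 k)"
    by (simp add: joint_def)
  show ?thesis unfolding mupir_scheme_def Let_def SNU using A B C' by blast
qed

lemma rate_1:
  assumes SNU: "N + U - 1 = 1" and K: "K \<ge> 1"
  shows "mupir_rate N U K 1 (\<lambda>_. return_pmf [0]) (\<lambda>s x w. map hd w) = inverse (\<Sum>i<K. 1 / real (N + U - 1) ^ i)"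
proof -
  define M where "M = msg_dist K 1"
  have fM: "finite (set_pmf M)" unfolding M_def by (rule fin_msg_dist)
  have fP: "finite (set_pmf (return_pmf [0::nat]))" by simp
  have d: "download N U K 1 (\<lambda>_. return_pmf [0]) (\<lambda>s x w. map hd w) \<theta> = real K" for \<theta>
  proof -
    have "download N U K 1 (\<lambda>_. return_pmf [0]) (\<lambda>s x w. map hd w) \<theta>
        = Hn (pair_pmf (return_pmf [0::nat]) M) (\<lambda>z. ((\<lambda>q w. map hd w) (fst z) (snd z), fst z))
          - Hn (pair_pmf (return_pmf [0::nat]) M) fst"
      unfolding download_def SNU cond_ent_Hn joint_def M_def
      by (simp, intro arg_cong2[where f="(-)"] Hn_cong) (auto split: prod.splits)
    also have "\<dots> = ent (map_pmf (map hd) M)"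
      using cond_pair[OF fP fM, of "\<lambda>q w. map hd w"] by simp
    also have "\<dots> = Hn M (\<lambda>w. w)"
      unfolding Hn_def[symmetric]
    proof (rule Hn_eq[OF fM])
      fix z z' assume "z \<in> set_pmf M" "z' \<in> set_pmf M"
      then show "(z = z') = (map hd z = map hd z')"
        unfolding M_def using msg1_inj by (metis set_msg_dist)
    qed
    also have "\<dots> = real K" unfolding M_def using Hn_id_msg[of K 1] by simp
    finally show ?thesis .
  qed
  have "(\<lambda>\<theta>. download N U K 1 (\<lambda>_. return_pmf [0]) (\<lambda>s x w. map hd w) \<theta>) ` {..<K} = (\<lambda>\<theta>. real K) ` {..<K}"
    by (rule image_cong) (rule refl, rule d)
  also have "\<dots> = {real K}"
  proof -
    have "{..<K} \<noteq> {}" using K by (simp add: lessThan_empty_iff)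
    then show ?thesis by (simp add: image_constant_conv)
  qed
  finally have im: "(\<lambda>\<theta>. download N U K 1 (\<lambda>_. return_pmf [0]) (\<lambda>s x w. map hd w) \<theta>) ` {..<K} = {real K}" .
  show ?thesis unfolding mupir_rate_def im SNU by (simp add: inverse_eq_divide)
qed

lemma rate_le:
  assumes sch: "mupir_scheme N U K L Qd ans" and K: "K \<ge> 1" and S1: "N + U - 1 \<ge> 1"
  shows "mupir_rate N U K L Qd ans \<le> inverse (\<Sum>i<K. 1 / real (N + U - 1) ^ i)"
proof -
  define G where "G = (\<Sum>i<K. 1 / real (N + U - 1) ^ i)"
  have G1: "G \<ge> 1"
  proof -
    have "1 / real (N + U - 1) ^ 0 \<le> G" unfolding G_def
      by (rule member_le_sum) (use K in auto)
    then show ?thesis by simp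
  qed
  define Dm where "Dm = (MAX \<theta>\<in>{..<K}. download N U K L Qd ans \<theta>)"
  have "download N U K L Qd ans 0 \<le> Dm"
    unfolding Dm_def by (rule Max_ge) (use K in auto)
  moreover have "download N U K L Qd ans 0 \<ge> real L * G"
    unfolding G_def by (rule converse[OF sch K S1])
  ultimately have DG: "Dm \<ge> real L * G" by simp
  show ?thesis
  proof (cases "L = 0")
    case True
    have "inverse G \<ge> 0" using G1 by simp
    then show ?thesis unfolding mupir_rate_def G_def[symmetric] using True by simp
  next
    case False
    then have Lp: "real L > 0" by simp
    have "real L / Dm \<le> real L / (real L * G)"
    proof (rule divide_left_mono)
      have LG: "real L * G > 0" using Lp G1 by simp
      then have "Dm > 0" using DG by simp
      then show "0 < Dm * (real L * G)" using LG by simp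
    qed (use DG Lp in auto)
    also have "\<dots> = inverse G" using Lp by (simp add: field_simps)
    finally show ?thesis unfolding mupir_rate_def Dm_def[symmetric] G_def by simp
  qed
qed

theorem theorem1:
  fixes N U K :: nat
  assumes "N \<ge> 1" and "U \<ge> 1" and "K \<ge> 1"
  shows "mupir_capacity N U K =
           inverse (\<Sum>i<K. 1 / real (N + U - 1) ^ i)"
proof -
  define C where "C = inverse (\<Sum>i<K. 1 / real (N + U - 1) ^ i)"
  have S1: "N + U - 1 \<ge> 1" using assms by simp
  have mem: "C \<in> {mupir_rate N U K L Qd ans | L Qd ans. mupir_scheme N U K L Qd ans}"
  proof (cases "N + U - 1 = 1")
    case True
    show ?thesis unfolding C_def
      by (rule mem_rates[OF scheme_1[OF True assms(3)] rate_1[OF True assms(3)]])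
  next
    case False
    define S where "S = N + U - 1"
    have S2: "S \<ge> 2" using False S1 by (simp add: S_def)
    show ?thesis unfolding C_def S_def[symmetric]
      by (rule mem_rates[OF scheme_v[OF S2 S_def assms(3)] rate_v[OF S2 S_def assms(3)]])
  qed
  have ub: "x \<le> C" if "x \<in> {mupir_rate N U K L Qd ans | L Qd ans. mupir_scheme N U K L Qd ans}" for x
    using that rate_le[OF _ assms(3) S1] unfolding C_def by blast
  show ?thesis unfolding mupir_capacity_def C_def[symmetric]
    by (rule cSup_eq_maximum[OF mem ub])
qed

end
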